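(* Let $\Sigma$ be an alphabet, $\triangleleft\notin\Sigma$, and let $L\subseteq\Sigma^*$ be context-free. Then the language $$\mathrm{Next}(L)=\bigcup_{n\in\mathbb N}\bigl\{\langle\sigma_2,\sigma_1\rangle\cdots\langle\sigma_n,\sigma_{n-1}\rangle\langle\triangleleft,\sigma_n\rangle \;\big|\; \sigma_1,\dots,\sigma_n\in\Sigma,\ \sigma_1\cdots\sigma_n\in L\bigr\}$$ over the alphabet $(\Sigma\cup\{\triangleleft\})\times\Sigma$ is context-free. *)

theory Defs
  imports Main
begin

text \<open>A symbol is Inl A (nonterminal) or Inr a (terminal).\<close>

type_synonym ('n, 't) prods = "('n \<times> ('n + 't) list) set"

inductive derives1 :: "('n, 't) prods \<Rightarrow> ('n + 't) list \<Rightarrow> ('n + 't) list \<Rightarrow> bool"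
  for P where
  step: "(A, alpha) \<in> P \<Longrightarrow> derives1 P (u @ [Inl A] @ w) (u @ alpha @ w)"

definition derives :: "('n, 't) prods \<Rightarrow> ('n + 't) list \<Rightarrow> ('n + 't) list \<Rightarrow> bool" where
  "derives P = (derives1 P)\<^sup>*\<^sup>*"

definition lang :: "('n, 't) prods \<Rightarrow> 'n \<Rightarrow> 't list set" where
  "lang P S = {w. derives P [Inl S] (map Inr w)}"

text \<open>A language is context-free if it is generated by some finite grammar;
  nonterminals are taken to be natural numbers (no loss of generality).\<close>
definition context_free :: "'t list set \<Rightarrow> bool" where
  "context_free L \<longleftrightarrow> (\<exists>(P :: (nat, 't) prods) S. finite P \<and> L = lang P S)"

text \<open>Next(L): for a nonempty word s1...sn, the word <s2,s1>...<sn,s(n-1)><tri,sn>.\<close>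
definition next_word :: "'a \<Rightarrow> 'a list \<Rightarrow> ('a \<times> 'a) list" where
  "next_word tri w = zip (tl w @ [tri]) w"

definition Next :: "'a \<Rightarrow> 'a list set \<Rightarrow> ('a \<times> 'a) list set" where
  "Next tri L = {next_word tri w | w. w \<in> L \<and> w \<noteq> []}"

end

theory Submission
  imports Defs
begin

inductive gen :: "('n,'t) prods \<Rightarrow> ('n+'t) \<Rightarrow> 't list \<Rightarrow> bool"
  and gens :: "('n,'t) prods \<Rightarrow> ('n+'t) list \<Rightarrow> 't list \<Rightarrow> bool"
  for P where
  gen_T: "gen P (Inr t) [t]"
| gen_N: "(A, al) \<in> P \<Longrightarrow> gens P al w \<Longrightarrow> gen P (Inl A) w"
| gens_Nil: "gens P [] []"
| gens_Cons: "gen P X u \<Longrightarrow> gens P xs v \<Longrightarrow> gens P (X#xs) (u@v)"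

inductive_cases gens_NilE: "gens P [] w"
inductive_cases gens_ConsE: "gens P (X#xs) w"
inductive_cases gen_InrE: "gen P (Inr t) w"
inductive_cases gen_InlE: "gen P (Inl A) w"

lemma gens_append: "gens P (x@y) w \<longleftrightarrow> (\<exists>w1 w2. w = w1@w2 \<and> gens P x w1 \<and> gens P y w2)"
proof (induction x arbitrary: w)
  case Nil
  then show ?case by (auto intro: gens_Nil elim: gens_NilE)
next
  case (Cons X x)
  show ?case
  proof
    assume "gens P ((X#x)@y) w"
    then obtain u v where "w = u@v" "gen P X u" "gens P (x@y) v" by (auto elim: gens_ConsE)
    with Cons obtain v1 v2 where "v = v1@v2" "gens P x v1" "gens P y v2" by blast
    then show "\<exists>w1 w2. w = w1@w2 \<and> gens P (X#x) w1 \<and> gens P y w2"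
      using \<open>w = u@v\<close> \<open>gen P X u\<close> by (metis append.assoc gens_Cons)
  next
    assume "\<exists>w1 w2. w = w1@w2 \<and> gens P (X#x) w1 \<and> gens P y w2"
    then obtain w1 w2 where "w = w1@w2" "gens P (X#x) w1" "gens P y w2" by blast
    then obtain u v1 where "w1 = u@v1" "gen P X u" "gens P x v1" by (auto elim: gens_ConsE)
    with Cons have "gens P (x@y) (v1@w2)" using \<open>gens P y w2\<close> by blast
    then show "gens P ((X#x)@y) w" using \<open>w = w1@w2\<close> \<open>w1 = u@v1\<close> \<open>gen P X u\<close>
      by (metis append.assoc append_Cons gens_Cons)
  qed
qed

lemma gens_single: "gens P [X] w \<longleftrightarrow> gen P X w"
  by (metis append_Nil2 gens_Cons gens_ConsE gens_Nil gens_NilE)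

lemma derives1_ctx: "derives1 P u v \<Longrightarrow> derives1 P (x@u@y) (x@v@y)"
proof (induction rule: derives1.induct)
  case (step A alpha u w)
  then show ?case using derives1.step[OF step, of "x@u" "w@y"] by simp
qed

lemma derives_ctx: "derives P u v \<Longrightarrow> derives P (x@u@y) (x@v@y)"
  unfolding derives_def
  by (induction rule: rtranclp_induct) (auto intro: rtranclp.rtrancl_into_rtrancl derives1_ctx)

lemma derives_append: "derives P u u' \<Longrightarrow> derives P v v' \<Longrightarrow> derives P (u@v) (u'@v')"
proof -
  assume a: "derives P u u'" "derives P v v'"
  have "derives P ([]@u@v) ([]@u'@v)" using derives_ctx[OF a(1)] by blast
  moreover have "derives P (u'@v@[]) (u'@v'@[])" using derives_ctx[OF a(2)] by blast
  ultimately show ?thesis unfolding derives_def by simp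
qed

lemma gen_derives: "gen P X w \<Longrightarrow> derives P [X] (map Inr w)"
  "gens P xs w \<Longrightarrow> derives P xs (map Inr w)"
proof (induction rule: gen_gens.inducts)
  case (gen_T t)
  then show ?case by (simp add: derives_def)
next
  case (gen_N A al w)
  have "derives1 P ([]@[Inl A]@[]) ([]@al@[])" by (rule derives1.step[OF gen_N(1)])
  then show ?case using gen_N(3) unfolding derives_def by simp
next
  case gens_Nil
  then show ?case by (simp add: derives_def)
next
  case (gens_Cons X u xs v)
  then show ?case using derives_append[OF gens_Cons(2) gens_Cons(4)] by simp
qed

lemma gens_map_Inr: "gens P (map Inr w) w"
  by (induction w) (auto intro: gens_Nil gens_Cons[of _ _ "[_]", simplified] gen_T)

lemma derives_gens: "derives P u (map Inr w) \<Longrightarrow> gens P u w"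
  unfolding derives_def
proof (induction rule: converse_rtranclp_induct)
  case base
  then show ?case by (rule gens_map_Inr)
next
  case (step y z)
  from step(1) show ?case
  proof cases
    case (step A alpha u w')
    from \<open>gens P z w\<close>[unfolded step] obtain w1 w2 w3 where
      "w = w1@w2@w3" "gens P u w1" "gens P alpha w2" "gens P w' w3"
      by (auto simp: gens_append)
    moreover have "gen P (Inl A) w2" using step(3) \<open>gens P alpha w2\<close>
      by (simp add: gen_N)
    ultimately have "gens P (Inl A # w') (w2@w3)" by (simp add: gens_Cons)
    then show ?thesis unfolding step using \<open>w = w1@w2@w3\<close> \<open>gens P u w1\<close>
      by (auto simp: gens_append)
  qed
qed

lemma lang_gen: "lang P S = {w. gen P (Inl S) w}"
  unfolding lang_def using derives_gens gen_derives gens_single by blast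

fun rsym :: "('n \<Rightarrow> 'm) \<Rightarrow> ('n + 't) \<Rightarrow> ('m + 't)" where
  "rsym f (Inl A) = Inl (f A)"
| "rsym f (Inr t) = Inr t"

definition rn :: "('n \<Rightarrow> 'm) \<Rightarrow> ('n,'t) prods \<Rightarrow> ('m,'t) prods" where
  "rn f P = (\<lambda>(A,al). (f A, map (rsym f) al)) ` P"

definition nts :: "('n,'t) prods \<Rightarrow> 'n set" where
  "nts P = fst ` P \<union> {B. \<exists>p\<in>P. Inl B \<in> set (snd p)}"

lemma rn_fwd: "gen P X w \<Longrightarrow> gen (rn f P) (rsym f X) w"
  "gens P xs w \<Longrightarrow> gens (rn f P) (map (rsym f) xs) w"
proof (induction rule: gen_gens.inducts)
  case (gen_T t)
  then show ?case by (simp add: gen_gens.gen_T)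
next
  case (gen_N A al w)
  have "(f A, map (rsym f) al) \<in> rn f P" unfolding rn_def
    by (rule image_eqI[where x="(A,al)"]) (simp_all add: gen_N(1))
  then show ?case using gen_gens.gen_N[OF _ gen_N(3)] by simp
next
  case gens_Nil
  then show ?case by (simp add: gen_gens.gens_Nil)
next
  case (gens_Cons X u xs v)
  then show ?case using gen_gens.gens_Cons by simp
qed

lemma rn_bwd:
  assumes inj: "inj_on f N" and nN: "nts P \<subseteq> N"
  shows "gen (rn f P) Y w \<Longrightarrow> Y = rsym f X \<Longrightarrow> (\<forall>A. X = Inl A \<longrightarrow> A \<in> N) \<Longrightarrow> gen P X w"
    and "gens (rn f P) ys w \<Longrightarrow> ys = map (rsym f) xs \<Longrightarrow> (\<forall>A. Inl A \<in> set xs \<longrightarrow> A \<in> N) \<Longrightarrow> gens P xs w"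
proof (induction arbitrary: X and xs rule: gen_gens.inducts)
  case (gen_T t)
  then show ?case using gen_gens.gen_T by (cases X) simp_all
next
  case (gen_N A' beta w)
  from gen_N(1) obtain B al where Bal: "(B, al) \<in> P" "A' = f B" "beta = map (rsym f) al"
    unfolding rn_def by auto
  from gen_N(4) obtain C where C: "X = Inl C" "f C = A'" by (cases X) auto
  have "C \<in> N" using gen_N(5) C by auto
  moreover have "B \<in> N" using nN Bal(1) unfolding nts_def by force
  ultimately have "C = B" using inj C Bal(2) by (auto dest: inj_onD)
  have "\<forall>A. Inl A \<in> set al \<longrightarrow> A \<in> N" using nN Bal(1) unfolding nts_def by force
  then have "gens P al w" using gen_N(3) Bal(3) by blast
  then show ?case using gen_gens.gen_N[OF Bal(1)] C(1) \<open>C = B\<close> by simp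
next
  case gens_Nil
  then show ?case by (simp add: gen_gens.gens_Nil)
next
  case (gens_Cons X' u xs' v)
  from gens_Cons(5) obtain Z zs where "xs = Z # zs" by (metis Cons_eq_map_conv)
  with gens_Cons(5) have "X' = rsym f Z" "xs' = map (rsym f) zs" by simp_all
  then have "gen P Z u" "gens P zs v"
    using gens_Cons(2)[of Z] gens_Cons(4)[of zs] gens_Cons(6) \<open>xs = Z # zs\<close> by simp_all
  then show ?case unfolding \<open>xs = Z # zs\<close> by (rule gen_gens.gens_Cons)
qed

lemma rn_lang:
  assumes "inj_on f N" "nts P \<subseteq> N" "S \<in> N"
  shows "lang (rn f P) (f S) = lang P S"
proof -
  have "gen (rn f P) (Inl (f S)) w \<longleftrightarrow> gen P (Inl S) w" for w
  proof
    assume "gen (rn f P) (Inl (f S)) w"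
    then show "gen P (Inl S) w" using rn_bwd(1)[OF assms(1,2), of "Inl (f S)" w "Inl S"] assms(3)
      by (metis rsym.simps(1) sum.inject(1))
  next
    assume "gen P (Inl S) w"
    then show "gen (rn f P) (Inl (f S)) w" using rn_fwd(1)[of P "Inl S" w f] by (metis rsym.simps(1))
  qed
  then show ?thesis unfolding lang_gen by blast
qed

lemma next_word_append:
  "next_word b (u@v) = next_word (hd (v@[b])) u @ next_word b v"
proof (cases v)
  case Nil
  then show ?thesis by (simp add: next_word_def)
next
  case (Cons y v')
  show ?thesis
  proof (cases u)
    case Nil
    then show ?thesis by (simp add: next_word_def)
  next
    case (Cons x u')
    have "zip (u' @ y # v' @ [b]) (x # u' @ y # v') =
          zip ((u' @ [y]) @ (v' @ [b])) ((x # u') @ (y # v'))" by simp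
    also have "\<dots> = zip (u' @ [y]) (x # u') @ zip (v' @ [b]) (y # v')"
      by (rule zip_append) simp
    finally show ?thesis using Cons \<open>v = y # v'\<close> by (simp add: next_word_def)
  qed
qed

definition lets :: "('n,'t) prods \<Rightarrow> 't \<Rightarrow> 't set" where
  "lets P tri = insert tri (\<Union>p\<in>P. {t. Inr t \<in> set (snd p)})"

inductive nchain :: "'t set \<Rightarrow> ('n+'t) list \<Rightarrow> 't \<Rightarrow> 't \<Rightarrow> (('n\<times>'t\<times>'t) option + ('t\<times>'t)) list \<Rightarrow> bool"
  for G where
  ch_Nil: "nchain G [] a a []"
| ch_N: "c \<in> G \<Longrightarrow> nchain G xs c b beta \<Longrightarrow> nchain G (Inl B # xs) a b (Inl (Some (B,a,c)) # beta)"
| ch_T: "c \<in> G \<Longrightarrow> nchain G xs c b beta \<Longrightarrow> nchain G (Inr a # xs) a b (Inr (c,a) # beta)"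

definition NP :: "('n,'t) prods \<Rightarrow> 'n \<Rightarrow> 't set \<Rightarrow> 't \<Rightarrow> (('n\<times>'t\<times>'t) option, 't\<times>'t) prods" where
  "NP P S Sig tri =
     {(Some (A,a,b), beta) | A al a b beta. (A,al) \<in> P \<and> a \<in> lets P tri \<and> b \<in> lets P tri
         \<and> nchain (lets P tri) al a b beta}
   \<union> {(None, [Inl (Some (S,a,tri))]) | a. a \<in> Sig}"

lemma gen_letters:
  "gen P X w \<Longrightarrow> set w \<subseteq> lets P tri \<union> {t. X = Inr t}"
  "gens P xs w \<Longrightarrow> set w \<subseteq> lets P tri \<union> {t. Inr t \<in> set xs}"
proof (induction rule: gen_gens.inducts)
  case (gen_T t)
  then show ?case by simp
next
  case (gen_N A al w)
  have "{t. Inr t \<in> set al} \<subseteq> lets P tri" using gen_N(1) unfolding lets_def by force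
  then show ?case using gen_N(3) by blast
next
  case gens_Nil
  then show ?case by simp
next
  case (gens_Cons X u xs v)
  then show ?case by auto
qed

lemma np_sound:
  "gen (NP P S Sig tri) Y v \<Longrightarrow> Y = Inl (Some (A,a,b)) \<Longrightarrow>
     \<exists>w. gen P (Inl A) w \<and> hd (w@[b]) = a \<and> v = next_word b w"
  "gens (NP P S Sig tri) beta v \<Longrightarrow> nchain (lets P tri) al a b beta \<Longrightarrow>
     \<exists>w. gens P al w \<and> hd (w@[b]) = a \<and> v = next_word b w"
proof (induction arbitrary: A a b and al a b rule: gen_gens.inducts)
  case (gen_T t)
  then show ?case by simp
next
  case (gen_N A' beta w)
  from gen_N(1) gen_N(4) obtain al where "(A,al) \<in> P" "nchain (lets P tri) al a b beta"
    unfolding NP_def by auto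
  with gen_N(3) obtain w' where "gens P al w'" "hd (w'@[b]) = a" "w = next_word b w'" by blast
  then show ?case using gen_gens.gen_N[OF \<open>(A,al) \<in> P\<close>] by blast
next
  case gens_Nil
  from gens_Nil have "al = [] \<and> a = b" by (cases rule: nchain.cases) auto
  then show ?case using gen_gens.gens_Nil by (auto simp: next_word_def)
next
  case (gens_Cons X u xs v)
  from gens_Cons(5) show ?case
  proof (cases rule: nchain.cases)
    case (ch_N c xs' B)
    from gens_Cons(2)[of B a c] ch_N obtain w1 where
      w1: "gen P (Inl B) w1" "hd (w1@[c]) = a" "u = next_word c w1" by blast
    from gens_Cons(4)[of xs' c b] ch_N obtain w2 where
      w2: "gens P xs' w2" "hd (w2@[b]) = c" "v = next_word b w2" by blast
    have "gens P al (w1@w2)" using ch_N(1) gen_gens.gens_Cons[OF w1(1) w2(1)] by simp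
    moreover have "hd ((w1@w2)@[b]) = a" using w1(2) w2(2) by (cases w1) auto
    moreover have "u @ v = next_word b (w1@w2)" using w1(3) w2(2,3) next_word_append by metis
    ultimately show ?thesis by blast
  next
    case (ch_T c xs')
    from gens_Cons(1) ch_T have "u = [(c,a)]" by (auto elim: gen_InrE)
    from gens_Cons(4)[of xs' c b] ch_T obtain w2 where
      w2: "gens P xs' w2" "hd (w2@[b]) = c" "v = next_word b w2" by blast
    have "gens P al ([a]@w2)" using ch_T(1) gen_gens.gens_Cons[OF gen_gens.gen_T w2(1)] by simp
    moreover have "hd (([a]@w2)@[b]) = a" by simp
    moreover have "u @ v = next_word b ([a]@w2)" using \<open>u = [(c,a)]\<close> w2(2,3) next_word_append[of b "[a]" w2]
      by (simp add: next_word_def)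
    ultimately show ?thesis by blast
  qed
qed

lemma np_complete:
  "gen P X w \<Longrightarrow> X = Inl A \<Longrightarrow> b \<in> lets P tri \<Longrightarrow>
     gen (NP P S Sig tri) (Inl (Some (A, hd (w@[b]), b))) (next_word b w)"
  "gens P al w \<Longrightarrow> b \<in> lets P tri \<Longrightarrow> (\<forall>t. Inr t \<in> set al \<longrightarrow> t \<in> lets P tri) \<Longrightarrow>
     \<exists>beta. nchain (lets P tri) al (hd (w@[b])) b beta \<and> gens (NP P S Sig tri) beta (next_word b w)"
proof (induction arbitrary: A b and b rule: gen_gens.inducts)
  case (gen_T t)
  then show ?case by simp
next
  case (gen_N A' al w)
  have A: "A' = A" using gen_N(4) by simp
  have tl: "\<forall>t. Inr t \<in> set al \<longrightarrow> t \<in> lets P tri" using gen_N(1) unfolding lets_def by force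
  then obtain beta where beta: "nchain (lets P tri) al (hd (w@[b])) b beta"
    "gens (NP P S Sig tri) beta (next_word b w)" using gen_N(3)[OF gen_N(5)] by blast
  have "set w \<subseteq> lets P tri" using gen_letters(2)[OF gen_N(2), of tri] tl by blast
  then have "hd (w@[b]) \<in> lets P tri" using gen_N(5) by (cases w) auto
  then have "(Some (A, hd (w@[b]), b), beta) \<in> NP P S Sig tri"
    unfolding NP_def using gen_N(1) A gen_N(5) beta(1) by blast
  then show ?case by (rule gen_gens.gen_N[OF _ beta(2)])
next
  case gens_Nil
  have "nchain (lets P tri) [] (hd ([]@[b])) b []" using nchain.ch_Nil by simp
  moreover have "next_word b [] = []" by (simp add: next_word_def)
  ultimately show ?case using gen_gens.gens_Nil by metis
next
  case (gens_Cons X u xs v)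
  define c where "c = hd (v@[b])"
  have txs: "\<forall>t. Inr t \<in> set xs \<longrightarrow> t \<in> lets P tri" using gens_Cons(6) by simp
  have "set v \<subseteq> lets P tri" using gen_letters(2)[OF gens_Cons(3), of tri] txs by blast
  then have cG: "c \<in> lets P tri" using gens_Cons(5) unfolding c_def by (cases v) auto
  obtain beta2 where b2: "nchain (lets P tri) xs c b beta2" "gens (NP P S Sig tri) beta2 (next_word b v)"
    using gens_Cons(4)[OF gens_Cons(5) txs] unfolding c_def by blast
  have nw: "next_word b (u@v) = next_word c u @ next_word b v"
    unfolding c_def by (rule next_word_append)
  show ?case
  proof (cases X)
    case (Inl B)
    have g1: "gen (NP P S Sig tri) (Inl (Some (B, hd (u@[c]), c))) (next_word c u)"
      using gens_Cons(2)[OF Inl cG] .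
    have "nchain (lets P tri) (X#xs) (hd (u@[c])) b (Inl (Some (B, hd (u@[c]), c)) # beta2)"
      unfolding Inl by (rule nchain.ch_N[OF cG b2(1)])
    moreover have "hd ((u@v)@[b]) = hd (u@[c])" unfolding c_def by (cases u) auto
    moreover have "gens (NP P S Sig tri) (Inl (Some (B, hd (u@[c]), c)) # beta2) (next_word b (u@v))"
      unfolding nw by (rule gen_gens.gens_Cons[OF g1 b2(2)])
    ultimately show ?thesis by metis
  next
    case (Inr t)
    have "u = [t]" using gens_Cons(1) unfolding Inr by (auto elim: gen_InrE)
    have "nchain (lets P tri) (X#xs) t b (Inr (c,t) # beta2)"
      unfolding Inr by (rule nchain.ch_T[OF cG b2(1)])
    moreover have "hd ((u@v)@[b]) = t" using \<open>u = [t]\<close> by simp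
    moreover have "next_word c u = [(c,t)]" using \<open>u = [t]\<close> by (simp add: next_word_def)
    then have "gens (NP P S Sig tri) (Inr (c,t) # beta2) (next_word b (u@v))"
      unfolding nw using gen_gens.gens_Cons[OF gen_gens.gen_T b2(2)] by simp
    ultimately show ?thesis by metis
  qed
qed

lemma finite_Inr_set: "finite {t. Inr t \<in> set l}"
proof -
  have "{t. Inr t \<in> set l} = Inr -` set l" by auto
  then show ?thesis by (metis finite_set finite_vimageI inj_Inr)
qed

lemma finite_Inl_set: "finite {t. Inl t \<in> set l}"
proof -
  have "{t. Inl t \<in> set l} = Inl -` set l" by auto
  then show ?thesis by (metis finite_set finite_vimageI inj_Inl)
qed

lemma finite_lets: "finite P \<Longrightarrow> finite (lets P tri)"
  unfolding lets_def using finite_Inr_set by blast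

lemma nchain_bound:
  "nchain G al a b beta \<Longrightarrow> a \<in> G \<Longrightarrow> length beta = length al \<and>
     set beta \<subseteq> (\<lambda>x. Inl (Some x)) ` ({B. Inl B \<in> set al} \<times> G \<times> G) \<union> Inr ` (G \<times> G)"
proof (induction rule: nchain.induct)
  case (ch_Nil a)
  then show ?case by simp
next
  case (ch_N c xs b beta B a)
  then show ?case by auto
next
  case (ch_T c xs b beta a)
  then show ?case by auto
qed

lemma finite_NP:
  assumes "finite P" "finite Sig"
  shows "finite (NP P S Sig tri)"
proof -
  define G where "G = lets P tri"
  define NT where "NT = (\<Union>p\<in>P. {B. Inl B \<in> set (snd p)})"
  define Y where "Y = (\<lambda>x. Inl (Some x)) ` (NT \<times> G \<times> G) \<union> Inr ` (G \<times> G)"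
  define M where "M = Max (length ` snd ` P)"
  have fG: "finite G" unfolding G_def using finite_lets[OF assms(1)] .
  have fNT: "finite NT" unfolding NT_def using assms(1) finite_Inl_set by blast
  have fY: "finite Y" unfolding Y_def using fG fNT by simp
  have sub: "{(Some (A,a,b), beta) | A al a b beta. (A,al) \<in> P \<and> a \<in> G \<and> b \<in> G
         \<and> nchain G al a b beta} \<subseteq> (Some ` (fst ` P \<times> G \<times> G)) \<times> {beta. set beta \<subseteq> Y \<and> length beta \<le> M}"
  proof
    fix p assume "p \<in> {(Some (A,a,b), beta) | A al a b beta. (A,al) \<in> P \<and> a \<in> G \<and> b \<in> G
         \<and> nchain G al a b beta}"
    then obtain A al a b beta where p: "p = (Some (A,a,b), beta)" "(A,al) \<in> P" "a \<in> G" "b \<in> G"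
      "nchain G al a b beta" by blast
    from nchain_bound[OF p(5,3)] have
      l: "length beta = length al" and
      s: "set beta \<subseteq> (\<lambda>x. Inl (Some x)) ` ({B. Inl B \<in> set al} \<times> G \<times> G) \<union> Inr ` (G \<times> G)"
      by auto
    have "{B. Inl B \<in> set al} \<subseteq> NT" unfolding NT_def using p(2) by force
    then have "set beta \<subseteq> Y" using s unfolding Y_def by blast
    moreover have "length al \<le> M" unfolding M_def using p(2) assms(1)
      by (metis Max_ge finite_imageI image_eqI snd_conv)
    moreover have "A \<in> fst ` P" using p(2) by force
    ultimately show "p \<in> (Some ` (fst ` P \<times> G \<times> G)) \<times> {beta. set beta \<subseteq> Y \<and> length beta \<le> M}"
      using p(1,3,4) l by auto
  qed
  have f1: "finite ((Some ` (fst ` P \<times> G \<times> G)) \<times> {beta. set beta \<subseteq> Y \<and> length beta \<le> M})"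
    using fG fY assms(1) finite_lists_length_le by blast
  have "{(None, [Inl (Some (S,a,tri))]) | a. a \<in> Sig} = (\<lambda>a. (None, [Inl (Some (S,a,tri))])) ` Sig"
    by auto
  then have f2: "finite {(None, [Inl (Some (S,a,tri))]) | a. a \<in> Sig}" using assms(2) by simp
  show ?thesis unfolding NP_def using finite_subset[OF sub f1] f2 unfolding G_def by simp
qed

lemma finite_nts: assumes "finite P" shows "finite (nts P)"
proof -
  have "{B. \<exists>p\<in>P. Inl B \<in> set (snd p)} = (\<Union>p\<in>P. {B. Inl B \<in> set (snd p)})" by blast
  moreover have "finite (\<Union>p\<in>P. {B. Inl B \<in> set (snd p)})" using assms finite_Inl_set by blast
  ultimately show ?thesis unfolding nts_def using assms by simp
qed

theorem lemma3p4:
  fixes Sigma :: "'a set" and tri :: 'a and L :: "'a list set"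
  assumes "finite Sigma"
    and "tri \<notin> Sigma"
    and "L \<subseteq> lists Sigma"
    and "context_free L"
  shows "context_free (Next tri L)"
proof -
  obtain P :: "(nat, 'a) prods" and S where fP: "finite P" and L: "L = lang P S"
    using assms(4) unfolding context_free_def by blast
  define P' where "P' = NP P S Sigma tri"
  have fP': "finite P'" unfolding P'_def by (rule finite_NP[OF fP assms(1)])
  have triG: "tri \<in> lets P tri" unfolding lets_def by simp
  have key: "gen P' (Inl None) v \<longleftrightarrow> v \<in> Next tri L" for v
  proof
    assume "gen P' (Inl None) v"
    then obtain beta where "(None, beta) \<in> P'" "gens P' beta v" by (auto elim: gen_InlE)
    then obtain a where a: "a \<in> Sigma" "beta = [Inl (Some (S,a,tri))]"
      unfolding P'_def NP_def by auto
    then have "gen P' (Inl (Some (S,a,tri))) v" using \<open>gens P' beta v\<close> gens_single by metis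
    then obtain w where w: "gen P (Inl S) w" "hd (w@[tri]) = a" "v = next_word tri w"
      using np_sound(1)[of P S Sigma tri _ v S a tri] unfolding P'_def by blast
    have "w \<noteq> []" using w(2) a(1) assms(2) by auto
    moreover have "w \<in> L" unfolding L lang_gen using w(1) by simp
    ultimately show "v \<in> Next tri L" unfolding Next_def using w(3) by blast
  next
    assume "v \<in> Next tri L"
    then obtain w where w: "v = next_word tri w" "w \<in> L" "w \<noteq> []" unfolding Next_def by blast
    have g: "gen P (Inl S) w" using w(2) unfolding L lang_gen by simp
    have "hd w \<in> Sigma" using w(2,3) assms(3) by (cases w) auto
    then have hdS: "hd (w@[tri]) \<in> Sigma" using w(3) by (cases w) auto
    have g2: "gen P' (Inl (Some (S, hd (w@[tri]), tri))) v"
      using np_complete(1)[OF g refl triG, of S Sigma] w(1) unfolding P'_def by simp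
    have "(None, [Inl (Some (S, hd (w@[tri]), tri))]) \<in> P'" unfolding P'_def NP_def using hdS by blast
    moreover have "gens P' [Inl (Some (S, hd (w@[tri]), tri))] v" using g2 gens_single by metis
    ultimately show "gen P' (Inl None) v" by (rule gen_gens.gen_N)
  qed
  have langP': "lang P' None = Next tri L" unfolding lang_gen using key by blast
  define N where "N = insert None (nts P')"
  have "finite N" unfolding N_def using finite_nts[OF fP'] by simp
  then obtain f :: "_ \<Rightarrow> nat" and n where "f ` N = {i. i < n}" "inj_on f N"
    using finite_imp_inj_to_nat_seg by blast
  have "lang (rn f P') (f None) = lang P' None"
    by (rule rn_lang[OF \<open>inj_on f N\<close>]) (auto simp: N_def)
  moreover have "finite (rn f P')" unfolding rn_def using fP' by simp
  ultimately show ?thesis unfolding context_free_def using langP' by metis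
qed

end
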